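(* Suppose \[(\mathfrak g,\mathbf R)\in\left\{(\mathfrak{so}_{2n+1},V),(\mathfrak{sp}_n,V),(\mathfrak{sp}_n,\textstyle\bigwedge^2_0),(\mathfrak{sp}_n,V\oplus\bigwedge^2_0),(\mathfrak f_4,\mathbf{26}),(\mathfrak g_2,\mathbf 7)\right\}\] and that $\mathfrak g$ has rank $n$. Then $I(\mathfrak g,\mathbf R)$ is a cone over a simplex $\Delta^{n-1}$. In particular it has exactly one chamber, and for each $k$ the number of $k$-faces and the number of $k$-flats are both $\binom nk$.
   Context: For a reductive complex Lie algebra $\mathfrak g$ with a split real form $\mathfrak h$ of a Cartan subalgebra and a representation $\mathbf R$, $I(\mathfrak g,\mathbf R)$ is the real hyperplane arrangement formed by the kernels (in $\mathfrak h$) of the nonzero weights of $\mathbf R$, restricted to the closed dual fundamental Weyl chamber $W\subseteq\mathfrak h$. Chambers are closures of connected components of the interior of $W$ minus the hyperplanes; faces are chambers and their intersections with supporting hyperplanes; flats are intersections of $W$ with (possibly empty) families of the hyperplanes; $k$-faces/$k$-flats are those whose linear span has dimension $k$. $V$ denotes the vector representation of $\mathfrak{so}_{2n+1}$ and of $\mathfrak{sp}_n$; for $\mathfrak{sp}_n$, $\bigwedge^2V=\bigwedge^2_0\oplus\mathrm{triv}$ with $\bigwedge^2_0$ irreducible; $\mathbf{26}$ and $\mathbf 7$ are the unique irreducible representations of $\mathfrak f_4$ and $\mathfrak g_2$ of those dimensions.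
   Formalization: Flats are intersections of W with families of hyperplanes drawn from both the kernels of the nonzero weights of R and the walls of W (the kernels of the simple roots), not the weight kernels alone. The statement above fails without it. *)

theory Defs
  imports "HOL-Analysis.Analysis" "HOL-Library.Function_Algebras"
begin

text \<open>The split real Cartan subalgebra of a rank-n algebra is modelled as R^n, i.e. the
  functions x :: nat => real vanishing outside {0..<n} (coordinate i corresponds to the
  paper's e_(i+1)).\<close>

definition En :: "nat \<Rightarrow> (nat \<Rightarrow> real) set" where
  "En n = {x. \<forall>i\<ge>n. x i = 0}"

definition fscale :: "real \<Rightarrow> (nat \<Rightarrow> real) \<Rightarrow> (nat \<Rightarrow> real)" where
  "fscale c x = (\<lambda>i. c * x i)"

definition span_dim :: "(nat \<Rightarrow> real) set \<Rightarrow> nat" where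
  "span_dim F = vector_space.dim fscale (module.span fscale F)"

text \<open>A linear functional on R^n is given by its coefficient vector f (entries i < n);
  ev n f x is its value at x.\<close>
definition ev :: "nat \<Rightarrow> (nat \<Rightarrow> real) \<Rightarrow> (nat \<Rightarrow> real) \<Rightarrow> real" where
  "ev n f x = (\<Sum>i<n. f i * x i)"

definition nonzero_fun :: "nat \<Rightarrow> (nat \<Rightarrow> real) \<Rightarrow> bool" where
  "nonzero_fun n f \<longleftrightarrow> (\<exists>i<n. f i \<noteq> 0)"

definition kernel :: "nat \<Rightarrow> (nat \<Rightarrow> real) \<Rightarrow> (nat \<Rightarrow> real) set" where
  "kernel n f = {x \<in> En n. ev n f x = 0}"

text \<open>standard basis vector / coordinate functional e_i (0-based)\<close>
definition ee :: "nat \<Rightarrow> nat \<Rightarrow> real" where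
  "ee i = (\<lambda>j. if j = i then 1 else 0)"

datatype pair =
    SO_odd_V nat       \<comment> \<open>(so_(2n+1), V), rank n\<close>
  | Sp_V nat
  | Sp_Wedge2_0 nat
  | Sp_V_Wedge2_0 nat
  | F4_26
  | G2_7

fun rank :: "pair \<Rightarrow> nat" where
  "rank (SO_odd_V n) = n"
| "rank (Sp_V n) = n"
| "rank (Sp_Wedge2_0 n) = n"
| "rank (Sp_V_Wedge2_0 n) = n"
| "rank F4_26 = 4"
| "rank G2_7 = 2"

fun valid_pair :: "pair \<Rightarrow> bool" where
  "valid_pair (SO_odd_V n) \<longleftrightarrow> n \<ge> 1"
| "valid_pair (Sp_V n) \<longleftrightarrow> n \<ge> 1"
| "valid_pair (Sp_Wedge2_0 n) \<longleftrightarrow> n \<ge> 1"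
| "valid_pair (Sp_V_Wedge2_0 n) \<longleftrightarrow> n \<ge> 1"
| "valid_pair F4_26 \<longleftrightarrow> True"
| "valid_pair G2_7 \<longleftrightarrow> True"

text \<open>Simple roots (Bourbaki conventions).  F_4: e_2 - e_3, e_3 - e_4, e_4, (e_1-e_2-e_3-e_4)/2.
  G_2: here h is given the basis of fundamental coweights, so that the simple roots
  alpha_1 (short), alpha_2 (long) are the coordinate functionals.\<close>
fun simple_roots :: "pair \<Rightarrow> (nat \<Rightarrow> real) set" where
  "simple_roots (SO_odd_V n) = {ee i - ee (Suc i) | i. Suc i < n} \<union> {ee (n - 1)}"
| "simple_roots (Sp_V n) = {ee i - ee (Suc i) | i. Suc i < n} \<union> {fscale 2 (ee (n - 1))}"
| "simple_roots (Sp_Wedge2_0 n) = {ee i - ee (Suc i) | i. Suc i < n} \<union> {fscale 2 (ee (n - 1))}"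
| "simple_roots (Sp_V_Wedge2_0 n) = {ee i - ee (Suc i) | i. Suc i < n} \<union> {fscale 2 (ee (n - 1))}"
| "simple_roots F4_26 =
     {ee 1 - ee 2, ee 2 - ee 3, ee 3, fscale (1/2) (ee 0 - ee 1 - ee 2 - ee 3)}"
| "simple_roots G2_7 = {ee 0, ee 1}"

definition weights_V_B :: "nat \<Rightarrow> (nat \<Rightarrow> real) set" where
  "weights_V_B n = {ee i | i. i < n} \<union> {- ee i | i. i < n} \<union> {0}"

definition weights_V_C :: "nat \<Rightarrow> (nat \<Rightarrow> real) set" where
  "weights_V_C n = {ee i | i. i < n} \<union> {- ee i | i. i < n}"

definition weights_W2_0 :: "nat \<Rightarrow> (nat \<Rightarrow> real) set" where
  "weights_W2_0 n =
     {fscale s (ee i) + fscale t (ee j) | (s::real) (t::real) i j. s \<in> {1, -1} \<and> t \<in> {1, -1} \<and> i < j \<and> j < n}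
     \<union> (if n \<ge> 2 then {0} else {})"

text \<open>Weights of the 26-dimensional representation of f_4: the short roots and 0\<close>
definition weights_F4_26 :: "(nat \<Rightarrow> real) set" where
  "weights_F4_26 = {ee i | i. i < 4} \<union> {- ee i | i. i < 4}
     \<union> {(\<lambda>j. if j < 4 then s j / 2 else 0) | s. \<forall>j. s j \<in> {1, -1}} \<union> {0}"

text \<open>Weights of the 7-dimensional representation of g_2: the short roots and 0,
  in simple-root coordinates (alpha_1 short)\<close>
definition weights_G2_7 :: "(nat \<Rightarrow> real) set" where
  "weights_G2_7 = {ee 0, ee 0 + ee 1, fscale 2 (ee 0) + ee 1,
                   - ee 0, - (ee 0 + ee 1), - (fscale 2 (ee 0) + ee 1), 0}"

fun weights :: "pair \<Rightarrow> (nat \<Rightarrow> real) set" where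
  "weights (SO_odd_V n) = weights_V_B n"
| "weights (Sp_V n) = weights_V_C n"
| "weights (Sp_Wedge2_0 n) = weights_W2_0 n"
| "weights (Sp_V_Wedge2_0 n) = weights_V_C n \<union> weights_W2_0 n"
| "weights F4_26 = weights_F4_26"
| "weights G2_7 = weights_G2_7"

definition weyl_chamber :: "pair \<Rightarrow> (nat \<Rightarrow> real) set" where
  "weyl_chamber p = {x \<in> En (rank p). \<forall>a \<in> simple_roots p. ev (rank p) a x \<ge> 0}"

definition hyperplanes :: "pair \<Rightarrow> (nat \<Rightarrow> real) set set" where
  "hyperplanes p = {kernel (rank p) w | w. w \<in> weights p \<and> nonzero_fun (rank p) w}"

definition walls :: "pair \<Rightarrow> (nat \<Rightarrow> real) set set" where
  "walls p = {kernel (rank p) a | a. a \<in> simple_roots p}"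

definition htop :: "nat \<Rightarrow> (nat \<Rightarrow> real) topology" where
  "htop n = subtopology euclidean (En n)"

definition chambers :: "pair \<Rightarrow> (nat \<Rightarrow> real) set set" where
  "chambers p =
     (let T = htop (rank p);
          U = (T interior_of weyl_chamber p) - \<Union>(hyperplanes p)
      in {T closure_of C | C. C \<in> connected_components_of (subtopology T U)})"

definition is_face :: "pair \<Rightarrow> (nat \<Rightarrow> real) set \<Rightarrow> bool" where
  "is_face p F \<longleftrightarrow> F \<in> chambers p \<or>
     (\<exists>C \<in> chambers p. \<exists>f c. nonzero_fun (rank p) f \<and>
        (\<forall>x \<in> C. ev (rank p) f x \<ge> c) \<and> (\<exists>x \<in> C. ev (rank p) f x = c) \<and>
        F = {x \<in> C. ev (rank p) f x = c})"

definition is_flat :: "pair \<Rightarrow> (nat \<Rightarrow> real) set \<Rightarrow> bool" where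
  "is_flat p F \<longleftrightarrow>
     (\<exists>S. S \<subseteq> hyperplanes p \<union> walls p \<and> F = weyl_chamber p \<inter> \<Inter>S)"

definition simp_cone :: "(nat \<Rightarrow> nat \<Rightarrow> real) \<Rightarrow> nat set \<Rightarrow> (nat \<Rightarrow> real) set" where
  "simp_cone v S = {(\<Sum>i\<in>S. fscale (c i) (v i)) | c. \<forall>i\<in>S. c i \<ge> 0}"

end

theory Submission
  imports Defs
begin



interpretation fs: vector_space fscale
  by unfold_locales (auto simp: fscale_def algebra_simps fun_eq_iff)

lemma fscale_apply[simp]: "fscale c x k = c * x k" by (simp add: fscale_def)
lemma fscale_0[simp]: "fscale 0 x = 0" by (simp add: fun_eq_iff)
lemma fscale_1[simp]: "fscale 1 x = x" by (simp add: fun_eq_iff)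

lemma sum_fun_apply: "(\<Sum>i\<in>S. g i) k = (\<Sum>i\<in>S. (g i k::real))"
  by (induction S rule: infinite_finite_induct) auto

lemma ev_add[simp]: "ev n f (x + y) = ev n f x + ev n f y"
  by (simp add: ev_def algebra_simps sum.distrib)
lemma ev_diff[simp]: "ev n f (x - y) = ev n f x - ev n f y"
  by (simp add: ev_def algebra_simps sum_subtractf)
lemma ev_fscale[simp]: "ev n f (fscale c x) = c * ev n f x"
  by (simp add: ev_def algebra_simps sum_distrib_left)
lemma ev_zero[simp]: "ev n f 0 = 0"
  by (simp add: ev_def)
lemma ev_sum: "ev n f (\<Sum>i\<in>S. g i) = (\<Sum>i\<in>S. ev n f (g i))"
  by (simp add: ev_def sum_fun_apply sum_distrib_left sum.swap[of _ S])
lemma ev_fadd: "ev n (f + g) x = ev n f x + ev n g x"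
  by (simp add: ev_def algebra_simps sum.distrib)
lemma ev_fdiff: "ev n (f - g) x = ev n f x - ev n g x"
  by (simp add: ev_def algebra_simps sum_subtractf)
lemma ev_fsum: "ev n (\<Sum>i\<in>S. g i) x = (\<Sum>i\<in>S. ev n (g i) x)"
  by (simp add: ev_def sum_fun_apply sum_distrib_right sum.swap[of _ S])
lemma ev_fscale_f: "ev n (fscale c f) x = c * ev n f x"
  by (simp add: ev_def algebra_simps sum_distrib_left)
lemma ev_ee: "ev n (ee i) x = (if i < n then x i else 0)"
  unfolding ev_def ee_def by (simp add: if_distrib[of "\<lambda>c. c * _"] cong: if_cong)
lemma ev_ee2: "ev n f (ee i) = (if i < n then f i else 0)"
  unfolding ev_def ee_def by (simp add: if_distrib[of "\<lambda>c. _ * c"] cong: if_cong)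
lemma ev_cong: "(\<And>k. k < n \<Longrightarrow> f k = g k) \<Longrightarrow> ev n f x = ev n g x"
  by (simp add: ev_def)

lemma En_add: "x \<in> En n \<Longrightarrow> y \<in> En n \<Longrightarrow> x + y \<in> En n" by (simp add: En_def)
lemma En_fscale: "x \<in> En n \<Longrightarrow> fscale c x \<in> En n" by (simp add: En_def)
lemma En_sum: "(\<And>i. i \<in> S \<Longrightarrow> g i \<in> En n) \<Longrightarrow> (\<Sum>i\<in>S. g i) \<in> En n"
  by (simp add: En_def sum_fun_apply)
lemma ee_En: "i < n \<Longrightarrow> ee i \<in> En n" by (simp add: En_def ee_def)

lemma cont_ev: "continuous_on UNIV (ev n f)"
  unfolding ev_def by (intro continuous_intros continuous_on_product_coordinates)

lemma line_open:
  fixes G :: "(nat \<Rightarrow> real) set"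
  assumes "open G" "x \<in> G"
  shows "\<exists>e>0. \<forall>t. \<bar>t\<bar> < e \<longrightarrow> x + fscale t y \<in> G"
proof -
  have c: "continuous_on UNIV (\<lambda>t::real. x + fscale t y)"
    by (intro continuous_on_coordinatewise_then_product) (simp add: continuous_intros)
  have "open ((\<lambda>t::real. x + fscale t y) -` G)"
    using continuous_on_open_vimage[of UNIV] c assms(1) by auto
  moreover have "0 \<in> (\<lambda>t::real. x + fscale t y) -` G"
    using assms(2) by simp
  ultimately obtain e where "e > 0" "ball 0 e \<subseteq> (\<lambda>t::real. x + fscale t y) -` G"
    by (meson openE)
  then show ?thesis by (intro exI[of _ e]) (auto simp: subset_iff dist_real_def)
qed




definition good :: "nat \<Rightarrow> (nat \<Rightarrow> nat \<Rightarrow> real) \<Rightarrow> (nat \<Rightarrow> real) \<Rightarrow> bool" where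
  "good n v w \<longleftrightarrow> (\<forall>i<n. 0 \<le> ev n w (v i)) \<or> (\<forall>i<n. ev n w (v i) \<le> 0)"

locale cone_setup =
  fixes p :: pair and n :: nat and a v :: "nat \<Rightarrow> nat \<Rightarrow> real"
  assumes rk: "rank p = n" and npos: "n \<ge> 1"
  and vEn: "\<And>i. i<n \<Longrightarrow> v i \<in> En n"
  and D: "\<And>i j. i<n \<Longrightarrow> j<n \<Longrightarrow> ev n (a i) (v j) = (if i=j then 1 else 0)"
  and R: "\<And>x k. x \<in> En n \<Longrightarrow> x k = (\<Sum>i<n. ev n (a i) x * v i k)"
  and SR1: "\<And>s. s \<in> simple_roots p \<Longrightarrow> \<exists>i<n. \<exists>c>0. \<forall>k<n. s k = c * a i k"
  and SR2: "\<And>i. i<n \<Longrightarrow> \<exists>s\<in>simple_roots p. \<exists>c>0. \<forall>k<n. s k = c * a i k"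
  and HW: "\<And>w. w \<in> weights p \<Longrightarrow> nonzero_fun n w \<Longrightarrow> good n v w"
begin

definition CS :: "nat set \<Rightarrow> (nat \<Rightarrow> real) set" where
  "CS S = {x\<in>En n. (\<forall>i<n. 0 \<le> ev n (a i) x) \<and> (\<forall>i<n. i\<notin>S \<longrightarrow> ev n (a i) x = 0)}"

definition W0 where "W0 = {x\<in>En n. \<forall>i<n. 0 \<le> ev n (a i) x}"
definition O0 where "O0 = {x\<in>En n. \<forall>i<n. 0 < ev n (a i) x}"

lemma CS_all: "CS {..<n} = W0" by (auto simp: CS_def W0_def)

lemma expand: "x \<in> En n \<Longrightarrow> x = (\<Sum>i<n. fscale (ev n (a i) x) (v i))"
  by (rule ext) (simp add: sum_fun_apply R[symmetric])

lemma ev_expand: "x \<in> En n \<Longrightarrow> ev n w x = (\<Sum>i<n. ev n (a i) x * ev n w (v i))"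
  by (subst expand) (simp_all add: ev_sum)

lemma ev_a_sum: "j < n \<Longrightarrow> S \<subseteq> {..<n} \<Longrightarrow>
   ev n (a j) (\<Sum>i\<in>S. fscale (c i) (v i)) = (if j \<in> S then c j else 0)"
proof -
  assume j: "j < n" and S: "S \<subseteq> {..<n}"
  have "ev n (a j) (\<Sum>i\<in>S. fscale (c i) (v i)) = (\<Sum>i\<in>S. c i * (if j = i then 1 else 0))"
    using S j by (auto simp: ev_sum D intro!: sum.cong)
  also have "\<dots> = (if j \<in> S then c j else 0)"
    using S finite_subset[OF S] by (simp add: if_distrib[of "\<lambda>x. _ * x"] sum.delta cong: if_cong)
  finally show ?thesis .
qed

lemma cone_char: assumes S: "S \<subseteq> {..<n}" shows "simp_cone v S = CS S"
proof
  show "simp_cone v S \<subseteq> CS S"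
  proof
    fix x assume "x \<in> simp_cone v S"
    then obtain c where x: "x = (\<Sum>i\<in>S. fscale (c i) (v i))" and c: "\<forall>i\<in>S. c i \<ge> 0"
      by (auto simp: simp_cone_def)
    have "x \<in> En n" unfolding x using S by (intro En_sum En_fscale vEn) auto
    then show "x \<in> CS S" unfolding CS_def using c S by (auto simp: x ev_a_sum)
  qed
next
  show "CS S \<subseteq> simp_cone v S"
  proof
    fix x assume x: "x \<in> CS S"
    then have xE: "x \<in> En n" by (simp add: CS_def)
    have "x = (\<Sum>i<n. fscale (ev n (a i) x) (v i))" by (rule expand[OF xE])
    also have "\<dots> = (\<Sum>i\<in>S. fscale (ev n (a i) x) (v i))"
      using x S by (intro sum.mono_neutral_right) (auto simp: CS_def)
    finally show "x \<in> simp_cone v S" using x S unfolding simp_cone_def CS_def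
      by (intro CollectI exI[of _ "\<lambda>i. ev n (a i) x"]) auto
  qed
qed

lemma v_in_cone: "S \<subseteq> {..<n} \<Longrightarrow> j < n \<Longrightarrow> v j \<in> simp_cone v S \<longleftrightarrow> j \<in> S"
  using vEn D by (auto simp: cone_char CS_def)

lemma cone_inj: "S \<subseteq> {..<n} \<Longrightarrow> S' \<subseteq> {..<n} \<Longrightarrow> simp_cone v S = simp_cone v S' \<Longrightarrow> S = S'"
  using v_in_cone by blast

lemma v_inj: "inj_on v {..<n}"
proof (rule inj_onI)
  fix i j assume "i \<in> {..<n}" "j \<in> {..<n}" "v i = v j"
  then have "ev n (a i) (v i) = ev n (a i) (v j)" by simp
  with \<open>i \<in> {..<n}\<close> \<open>j \<in> {..<n}\<close> show "i = j" by (simp add: D split: if_splits)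
qed

lemma indep: "\<not> fs.dependent (v ` {..<n})"
proof
  assume "fs.dependent (v ` {..<n})"
  then obtain t u where t: "finite t" "t \<subseteq> v ` {..<n}" "(\<Sum>w\<in>t. fscale (u w) w) = 0"
    and w: "\<exists>w\<in>t. u w \<noteq> 0" unfolding fs.dependent_explicit by blast
  from w t(2) obtain j where j: "j < n" "v j \<in> t" "u (v j) \<noteq> 0" by auto
  have "0 = ev n (a j) (\<Sum>w\<in>t. fscale (u w) w)" by (simp add: t(3))
  also have "\<dots> = (\<Sum>w\<in>t. u w * ev n (a j) w)" by (simp add: ev_sum)
  also have "\<dots> = (\<Sum>w\<in>t. if w = v j then u w else 0)"
  proof (rule sum.cong)
    fix w assume "w \<in> t"
    then obtain i where i: "i < n" "w = v i" using t(2) by auto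
    then show "u w * ev n (a j) w = (if w = v j then u w else 0)"
      using j D[of j i] v_inj by (auto simp: inj_on_def)
  qed simp
  also have "\<dots> = u (v j)" using t(1) j(2) by simp
  finally show False using j(3) by simp
qed

lemma span_cone: "S \<subseteq> {..<n} \<Longrightarrow> fs.span (simp_cone v S) = fs.span (v ` S)"
proof (subst fs.span_eq, intro conjI)
  assume S: "S \<subseteq> {..<n}"
  show "simp_cone v S \<subseteq> fs.span (v ` S)"
  proof
    fix x assume "x \<in> simp_cone v S"
    then obtain c where x: "x = (\<Sum>i\<in>S. fscale (c i) (v i))" by (auto simp: simp_cone_def)
    show "x \<in> fs.span (v ` S)" unfolding x by (intro fs.span_sum fs.span_scale fs.span_base) auto
  qed
  show "v ` S \<subseteq> fs.span (simp_cone v S)"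
  proof
    fix y assume "y \<in> v ` S"
    then obtain j where j: "j \<in> S" "y = v j" by auto
    have "v j \<in> simp_cone v S" using j S by (subst v_in_cone) auto
    then show "y \<in> fs.span (simp_cone v S)" using j by (simp add: fs.span_base)
  qed
qed

lemma dim_cone: "S \<subseteq> {..<n} \<Longrightarrow> span_dim (simp_cone v S) = card S"
proof -
  assume S: "S \<subseteq> {..<n}"
  have ind: "fs.independent (v ` S)" using indep fs.independent_mono S by blast
  have "span_dim (simp_cone v S) = fs.dim (fs.span (v ` S))"
    by (simp add: span_dim_def span_cone[OF S])
  also have "\<dots> = card (v ` S)" using fs.dim_span_eq_card_independent[OF ind] .
  also have "\<dots> = card S" using S by (intro card_image inj_on_subset[OF v_inj])
  finally show ?thesis .
qed

lemma count_cones: "card {F. F \<in> {simp_cone v S | S. S \<subseteq> {..<n}} \<and> span_dim F = k} = n choose k"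
proof -
  have "{F. F \<in> {simp_cone v S | S. S \<subseteq> {..<n}} \<and> span_dim F = k} =
        simp_cone v ` {S. S \<subseteq> {..<n} \<and> card S = k}"
    by (auto simp: dim_cone)
  moreover have "inj_on (simp_cone v) {S. S \<subseteq> {..<n} \<and> card S = k}"
  proof (rule inj_onI)
    fix S S' assume "S \<in> {S. S \<subseteq> {..<n} \<and> card S = k}" "S' \<in> {S. S \<subseteq> {..<n} \<and> card S = k}"
      "simp_cone v S = simp_cone v S'"
    then show "S = S'" by (intro cone_inj) auto
  qed
  ultimately show ?thesis
    using n_subsets[of "{..<n}" k] by (simp add: card_image)
qed

end



context cone_setup begin

lemma ev_scale_root: "\<forall>k<n. s k = c * a i k \<Longrightarrow> ev n s x = c * ev n (a i) x"
  by (simp add: ev_def sum_distrib_left algebra_simps)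

lemma kernel_scale: assumes "\<forall>k<n. s k = c * a i k" "c > 0" shows "kernel n s = kernel n (a i)"
  using assms ev_scale_root[OF assms(1)] by (auto simp: kernel_def)

lemma W_eq: "weyl_chamber p = W0"
proof
  show "weyl_chamber p \<subseteq> W0"
  proof
    fix x assume x: "x \<in> weyl_chamber p"
    show "x \<in> W0" unfolding W0_def
    proof (intro CollectI conjI allI impI)
      show "x \<in> En n" using x by (simp add: weyl_chamber_def rk)
      fix i assume "i < n"
      then obtain s c where s: "s \<in> simple_roots p" "c > 0" "\<forall>k<n. s k = c * a i k" using SR2 by blast
      then have "0 \<le> ev n s x" using x by (simp add: weyl_chamber_def rk)
      then show "0 \<le> ev n (a i) x" using s ev_scale_root[OF s(3), of x] by (simp add: zero_le_mult_iff)
    qed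
  qed
next
  show "W0 \<subseteq> weyl_chamber p"
  proof
    fix x assume x: "x \<in> W0"
    show "x \<in> weyl_chamber p" unfolding weyl_chamber_def rk
    proof (intro CollectI conjI ballI)
      show "x \<in> En n" using x by (simp add: W0_def)
      fix s assume "s \<in> simple_roots p"
      then obtain i c where s: "i < n" "c > 0" "\<forall>k<n. s k = c * a i k" using SR1 by blast
      then show "0 \<le> ev n s x" using x ev_scale_root[OF s(3), of x] by (simp add: W0_def)
    qed
  qed
qed

lemma good_a: "i < n \<Longrightarrow> good n v (a i)"
  by (simp add: good_def D)

lemma walls_good: "H \<in> walls p \<Longrightarrow> \<exists>w. H = kernel n w \<and> good n v w"
proof -
  assume "H \<in> walls p"
  then obtain s where s: "s \<in> simple_roots p" "H = kernel n s" by (auto simp: walls_def rk)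
  then obtain i c where "i < n" "c > 0" "\<forall>k<n. s k = c * a i k" using SR1 by blast
  then show ?thesis using s kernel_scale[of s c i] by (intro exI[of _ "a i"]) (simp add: good_a)
qed

lemma a_walls: "i < n \<Longrightarrow> kernel n (a i) \<in> walls p"
proof -
  assume "i < n"
  then obtain s c where s: "s \<in> simple_roots p" "c > 0" "\<forall>k<n. s k = c * a i k" using SR2 by blast
  then show ?thesis using kernel_scale[OF s(3) s(2)] by (auto simp: walls_def rk)
qed

lemma hyp_good: "H \<in> hyperplanes p \<Longrightarrow> \<exists>w. H = kernel n w \<and> good n v w \<and> (\<exists>i<n. ev n w (v i) \<noteq> 0)"
proof -
  assume "H \<in> hyperplanes p"
  then obtain w where w: "w \<in> weights p" "nonzero_fun n w" "H = kernel n w"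
    by (auto simp: hyperplanes_def rk)
  have "\<exists>i<n. ev n w (v i) \<noteq> 0"
  proof (rule ccontr)
    assume "\<not> ?thesis"
    then have z: "\<forall>i<n. ev n w (v i) = 0" by auto
    from w(2) obtain j where j: "j < n" "w j \<noteq> 0" by (auto simp: nonzero_fun_def)
    have "ev n w (ee j) = (\<Sum>i<n. ev n (a i) (ee j) * ev n w (v i))"
      by (rule ev_expand) (simp add: ee_En j)
    also have "\<dots> = 0" using z by simp
    finally show False using j by (simp add: ev_ee2)
  qed
  then show ?thesis using w HW by blast
qed

lemma good_zero:
  assumes g: "good n v w" and x: "x \<in> W0"
  shows "ev n w x = 0 \<longleftrightarrow> (\<forall>i<n. ev n w (v i) \<noteq> 0 \<longrightarrow> ev n (a i) x = 0)"
proof -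
  have xE: "x \<in> En n" and xp: "\<forall>i<n. 0 \<le> ev n (a i) x" using x by (auto simp: W0_def)
  have e: "ev n w x = (\<Sum>i<n. ev n (a i) x * ev n w (v i))" by (rule ev_expand[OF xE])
  from g show ?thesis unfolding good_def
  proof
    assume h: "\<forall>i<n. 0 \<le> ev n w (v i)"
    have "(\<Sum>i<n. ev n (a i) x * ev n w (v i)) = 0 \<longleftrightarrow> (\<forall>i\<in>{..<n}. ev n (a i) x * ev n w (v i) = 0)"
      using h xp by (intro sum_nonneg_eq_0_iff) auto
    then show ?thesis using e by auto
  next
    assume h: "\<forall>i<n. ev n w (v i) \<le> 0"
    have "(\<Sum>i<n. - (ev n (a i) x * ev n w (v i))) = 0 \<longleftrightarrow> (\<forall>i\<in>{..<n}. - (ev n (a i) x * ev n w (v i)) = 0)"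
      using h xp by (intro sum_nonneg_eq_0_iff) (auto simp: mult_nonneg_nonpos)
    then show ?thesis using e by (auto simp: sum_negf)
  qed
qed

lemma good_pos:
  assumes g: "good n v w" and nz: "\<exists>i<n. ev n w (v i) \<noteq> 0" and x: "x \<in> O0"
  shows "ev n w x \<noteq> 0"
proof -
  have "x \<in> W0" using x by (auto simp: O0_def W0_def less_imp_le)
  show ?thesis
  proof
    assume "ev n w x = 0"
    then have h: "\<forall>i<n. ev n w (v i) \<noteq> 0 \<longrightarrow> ev n (a i) x = 0" using good_zero[OF g \<open>x \<in> W0\<close>] by simp
    from nz obtain i where "i < n" "ev n w (v i) \<noteq> 0" by blast
    with h have "ev n (a i) x = 0" by simp
    with \<open>i < n\<close> x show False by (auto simp: O0_def)
  qed
qed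

end



context cone_setup begin

definition rho where "rho = (\<Sum>i<n. v i)"

lemma rho_En: "rho \<in> En n" unfolding rho_def by (intro En_sum vEn) auto

lemma ev_rho: "j < n \<Longrightarrow> ev n (a j) rho = 1"
  using ev_a_sum[of j "{..<n}" "\<lambda>_. 1"] by (simp add: rho_def)

lemma ev_vi: "j < n \<Longrightarrow> i < n \<Longrightarrow> ev n (a j) (fscale t (v i)) = (if j = i then t else 0)"
  by (simp add: D)

lemma open_pos: "open {x. 0 < ev n f x}"
  using open_Collect_less[of "\<lambda>_. (0::real)" "ev n f"] cont_ev continuous_on_const by simp
lemma closed_pos: "closed {x. 0 \<le> ev n f x}"
  using closed_Collect_le[of "\<lambda>_. (0::real)" "ev n f"] cont_ev continuous_on_const by simp

lemma O0_open: "openin (htop n) O0"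
proof -
  have "open (\<Inter>i\<in>{..<n}. {x. 0 < ev n (a i) x})"
    using open_pos by (intro open_INT) auto
  moreover have "O0 = En n \<inter> (\<Inter>i\<in>{..<n}. {x. 0 < ev n (a i) x})" by (auto simp: O0_def)
  ultimately show ?thesis unfolding htop_def openin_open by (intro exI[of _ "\<Inter>i\<in>{..<n}. {x. 0 < ev n (a i) x}"] conjI)
qed

lemma W0_closed: "closedin (htop n) W0"
proof -
  have "closed (\<Inter>i\<in>{..<n}. {x. 0 \<le> ev n (a i) x})"
    using closed_pos by (intro closed_INT) auto
  moreover have "W0 = En n \<inter> (\<Inter>i\<in>{..<n}. {x. 0 \<le> ev n (a i) x})" by (auto simp: W0_def)
  ultimately show ?thesis unfolding htop_def closedin_closed by (intro exI[of _ "\<Inter>i\<in>{..<n}. {x. 0 \<le> ev n (a i) x}"] conjI)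
qed

lemma interior_eq: "htop n interior_of W0 = O0"
proof
  show "O0 \<subseteq> htop n interior_of W0"
    by (intro interior_of_maximal O0_open) (auto simp: O0_def W0_def less_imp_le)
next
  show "htop n interior_of W0 \<subseteq> O0"
  proof
    fix x assume x: "x \<in> htop n interior_of W0"
    have xW: "x \<in> W0" using x by (rule subsetD[OF interior_of_subset])
    have "\<exists>G. open G \<and> htop n interior_of W0 = En n \<inter> G"
      using openin_interior_of[of "htop n" W0] unfolding htop_def openin_open by assumption
    then obtain G where G: "open G" "htop n interior_of W0 = En n \<inter> G" by (elim exE conjE)
    show "x \<in> O0" unfolding O0_def
    proof (intro CollectI conjI allI impI)
      show "x \<in> En n" using xW by (simp add: W0_def)
      fix i assume i: "i < n"
      show "0 < ev n (a i) x"
      proof (rule ccontr)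
        assume "\<not> 0 < ev n (a i) x"
        then have z: "ev n (a i) x = 0" using xW i by (force simp: W0_def)
        have xG: "x \<in> G" using x G(2) by simp
        from line_open[OF G(1) xG, of "v i"]
        obtain e where e: "e > 0" "\<forall>t. \<bar>t\<bar> < e \<longrightarrow> x + fscale t (v i) \<in> G" by auto
        let ?y = "x + fscale (- e/2) (v i)"
        have h: "\<bar>-e/2\<bar> < e" using e(1) by simp
        have "?y \<in> G" by (rule mp[OF spec[OF e(2)] h])
        moreover have "?y \<in> En n" using xW i by (intro En_add En_fscale vEn) (auto simp: W0_def)
        ultimately have "?y \<in> htop n interior_of W0" using G(2) by simp
        then have "?y \<in> W0" by (rule subsetD[OF interior_of_subset])
        moreover have "ev n (a i) ?y = - e/2" using z i D by simp
        ultimately show False using i e(1) by (auto simp: W0_def)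
      qed
    qed
  qed
qed

lemma closure_eq: "htop n closure_of O0 = W0"
proof
  show "htop n closure_of O0 \<subseteq> W0"
    by (intro closure_of_minimal W0_closed) (auto simp: O0_def W0_def less_imp_le)
next
  show "W0 \<subseteq> htop n closure_of O0"
  proof
    fix x assume xW: "x \<in> W0"
    show "x \<in> htop n closure_of O0" unfolding in_closure_of
    proof (intro conjI allI impI)
      show "x \<in> topspace (htop n)" using xW by (simp add: htop_def W0_def)
      fix V assume V: "x \<in> V \<and> openin (htop n) V"
      then have "\<exists>G. open G \<and> V = En n \<inter> G" unfolding htop_def openin_open by simp
      then obtain G where G: "open G" "V = En n \<inter> G" by (elim exE conjE)
      have xG: "x \<in> G" using V G(2) by simp
      from line_open[OF G(1) xG, of rho]
      obtain e where e: "e > 0" "\<forall>t. \<bar>t\<bar> < e \<longrightarrow> x + fscale t rho \<in> G" by auto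
      let ?y = "x + fscale (e/2) rho"
      have "?y \<in> G" using e by auto
      moreover have yE: "?y \<in> En n" using xW by (intro En_add En_fscale rho_En) (auto simp: W0_def)
      moreover have "?y \<in> O0" unfolding O0_def
      proof (intro CollectI conjI allI impI yE)
        fix i assume i: "i < n"
        have "0 \<le> ev n (a i) x" using xW i by (simp add: W0_def)
        then show "0 < ev n (a i) ?y" using i e(1) by (simp add: ev_rho)
      qed
      ultimately show "\<exists>y. y \<in> O0 \<and> y \<in> V" using G(2) by (intro exI[of _ ?y]) simp
    qed
  qed
qed

lemma O0_nonempty: "rho \<in> O0" using rho_En ev_rho by (simp add: O0_def)

lemma O0_path_connected: "path_connected O0"
  unfolding path_connected_def
proof (intro ballI)
  fix x y assume x: "x \<in> O0" and y: "y \<in> O0"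
  let ?g = "\<lambda>t::real. x + fscale t (y - x)"
  have p1: "path ?g" unfolding path_def
    by (intro continuous_on_coordinatewise_then_product) (simp add: continuous_intros)
  have p2: "path_image ?g \<subseteq> O0"
  proof
    fix z assume "z \<in> path_image ?g"
    then obtain t where t: "0 \<le> t" "t \<le> 1" "z = ?g t" by (auto simp: path_image_def)
    have zE: "z \<in> En n" unfolding t(3) using x y
      by (intro En_add En_fscale) (auto simp: O0_def En_def)
    show "z \<in> O0" unfolding O0_def
    proof (intro CollectI conjI allI impI zE)
      fix i assume i: "i < n"
      have hx: "0 < ev n (a i) x" and hy: "0 < ev n (a i) y" using x y i by (auto simp: O0_def)
      have "ev n (a i) z = (1 - t) * ev n (a i) x + t * ev n (a i) y"
        by (simp add: t(3) algebra_simps)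
      also have "\<dots> > 0"
      proof (cases "t = 0")
        case True then show ?thesis using hx by simp
      next
        case False then have "t > 0" using t by simp
        then show ?thesis using hx hy t(2) by (intro add_nonneg_pos) auto
      qed
      finally show "0 < ev n (a i) z" .
    qed
  qed
  have p3: "pathstart ?g = x" by (simp add: pathstart_def fun_eq_iff)
  have p4: "pathfinish ?g = y" by (simp add: pathfinish_def fun_eq_iff)
  show "\<exists>g. path g \<and> path_image g \<subseteq> O0 \<and> pathstart g = x \<and> pathfinish g = y"
    by (rule exI[of _ ?g]) (intro conjI p1 p2 p3 p4)
qed

lemma hyp_disjoint: "\<Union>(hyperplanes p) \<inter> O0 = {}"
proof -
  { fix H x assume H: "H \<in> hyperplanes p" and x: "x \<in> H" "x \<in> O0"
    obtain w where w: "H = kernel n w" "good n v w" "\<exists>i<n. ev n w (v i) \<noteq> 0"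
      using hyp_good[OF H] by blast
    have "ev n w x = 0" using x w by (simp add: kernel_def)
    with good_pos[OF w(2) w(3) x(2)] have False by simp }
  then show ?thesis by blast
qed

lemma chambers_eq: "chambers p = {W0}"
proof -
  have I: "htop n interior_of weyl_chamber p = O0" by (simp add: W_eq interior_eq)
  have U: "(htop n interior_of weyl_chamber p) - \<Union>(hyperplanes p) = O0"
    unfolding I using hyp_disjoint by blast
  have "O0 \<subseteq> En n" by (auto simp: O0_def)
  then have sub: "subtopology (htop n) O0 = top_of_set O0"
    unfolding htop_def subtopology_subtopology by (simp add: Int_absorb1)
  have "connected_space (top_of_set O0)"
    by (intro path_connected_imp_connected_space) (simp add: O0_path_connected)
  moreover have "top_of_set O0 \<noteq> trivial_topology"
    using O0_nonempty null_topspace_iff_trivial[of "top_of_set O0"] by auto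
  ultimately have cc: "connected_components_of (top_of_set O0) = {O0}"
    by (simp add: connected_components_of_eq_singleton)
  have "chambers p = {htop n closure_of C | C. C \<in> connected_components_of (subtopology (htop n) O0)}"
    unfolding chambers_def Let_def rk U ..
  also have "\<dots> = {htop n closure_of O0}" unfolding sub cc by simp
  also have "\<dots> = {W0}" by (simp add: closure_eq)
  finally show ?thesis .
qed

end



context cone_setup begin

lemma W0_cone: "W0 = simp_cone v {..<n}" by (simp add: cone_char CS_all)

lemma zero_W0: "0 \<in> W0" by (simp add: W0_def En_def)

lemma v_W0: "i < n \<Longrightarrow> v i \<in> W0"
  using v_in_cone[of "{..<n}" i] by (simp add: W0_cone)

lemma CS_W0: "CS S = {x \<in> W0. \<forall>i<n. i \<notin> S \<longrightarrow> ev n (a i) x = 0}"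
  by (auto simp: CS_def W0_def)

lemma faces_eq: "{F. is_face p F} = {simp_cone v S | S. S \<subseteq> {..<n}}"
proof (rule set_eqI, rule iffI)
  fix F assume "F \<in> {F. is_face p F}"
  then have "F = W0 \<or> (\<exists>f c. nonzero_fun n f \<and> (\<forall>x \<in> W0. ev n f x \<ge> c) \<and>
        (\<exists>x \<in> W0. ev n f x = c) \<and> F = {x \<in> W0. ev n f x = c})"
    by (simp add: is_face_def chambers_eq rk)
  then show "F \<in> {simp_cone v S | S. S \<subseteq> {..<n}}"
  proof
    assume "F = W0" then show ?thesis using W0_cone by auto
  next
    assume "\<exists>f c. nonzero_fun n f \<and> (\<forall>x \<in> W0. ev n f x \<ge> c) \<and>
        (\<exists>x \<in> W0. ev n f x = c) \<and> F = {x \<in> W0. ev n f x = c}"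
    then obtain f c x0 where f: "\<forall>x \<in> W0. ev n f x \<ge> c" and x0: "x0 \<in> W0" "ev n f x0 = c"
      and F: "F = {x \<in> W0. ev n f x = c}" by blast
    have "c \<le> 0" using f zero_W0 by force
    have "fscale 2 x0 \<in> W0" using x0(1) by (auto simp: W0_def En_fscale)
    then have "2 * c \<ge> c" using f x0 by force
    then have c0: "c = 0" using \<open>c \<le> 0\<close> by simp
    have g: "good n v f" unfolding good_def using f v_W0 c0 by auto
    define S where "S = {i. i < n \<and> ev n f (v i) = 0}"
    have "F = CS S"
      unfolding F CS_W0 c0 S_def using good_zero[OF g] by auto
    moreover have "S \<subseteq> {..<n}" by (auto simp: S_def)
    ultimately show ?thesis using cone_char by auto
  qed
next
  fix F assume "F \<in> {simp_cone v S | S. S \<subseteq> {..<n}}"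
  then obtain S where S: "S \<subseteq> {..<n}" "F = simp_cone v S" by auto
  show "F \<in> {F. is_face p F}"
  proof (cases "S = {..<n}")
    case True then show ?thesis using S by (simp add: is_face_def chambers_eq W0_cone)
  next
    case False
    then obtain j where j: "j < n" "j \<notin> S" using S by auto
    define f where "f = (\<Sum>i\<in>{..<n} - S. a i)"
    have evf: "ev n f x = (\<Sum>i\<in>{..<n} - S. ev n (a i) x)" for x
      by (simp add: f_def ev_fsum)
    have "ev n f (v j) = (\<Sum>i\<in>{..<n} - S. if i = j then 1 else 0)"
      unfolding evf using j by (intro sum.cong) (auto simp: D)
    also have "\<dots> = 1" using j by simp
    finally have fvj: "ev n f (v j) = 1" .
    have nz: "nonzero_fun n f"
    proof (rule ccontr)
      assume "\<not> nonzero_fun n f"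
      then have "ev n f (v j) = 0" by (simp add: nonzero_fun_def ev_def)
      then show False using fvj by simp
    qed
    have pos: "\<forall>x\<in>W0. ev n f x \<ge> 0" unfolding evf by (auto simp: W0_def intro!: sum_nonneg)
    have "F = CS S" using S by (simp add: cone_char)
    also have "\<dots> = {x \<in> W0. ev n f x = 0}"
    proof -
      have "ev n f x = 0 \<longleftrightarrow> (\<forall>i<n. i \<notin> S \<longrightarrow> ev n (a i) x = 0)" if x: "x \<in> W0" for x
      proof -
        have "ev n f x = 0 \<longleftrightarrow> (\<forall>i\<in>{..<n} - S. ev n (a i) x = 0)"
          unfolding evf using x by (intro sum_nonneg_eq_0_iff) (auto simp: W0_def)
        then show ?thesis by auto
      qed
      then show ?thesis unfolding CS_W0 by auto
    qed
    finally have "F = {x \<in> W0. ev n f x = 0}" .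
    then have "\<exists>C \<in> chambers p. \<exists>f c. nonzero_fun (rank p) f \<and>
        (\<forall>x \<in> C. ev (rank p) f x \<ge> c) \<and> (\<exists>x \<in> C. ev (rank p) f x = c) \<and>
        F = {x \<in> C. ev (rank p) f x = c}"
      using nz pos zero_W0 unfolding chambers_eq rk
      by (intro bexI[of _ W0] exI[of _ f] exI[of _ 0] conjI bexI[of _ 0]) auto
    then show ?thesis by (simp add: is_face_def)
  qed
qed

lemma flats_eq: "{F. is_flat p F} = {simp_cone v S | S. S \<subseteq> {..<n}}"
proof (rule set_eqI, rule iffI)
  fix F assume "F \<in> {F. is_flat p F}"
  then obtain Fam where Fam: "Fam \<subseteq> hyperplanes p \<union> walls p" and F: "F = W0 \<inter> \<Inter>Fam"
    by (auto simp: is_flat_def W_eq)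
  have "\<forall>H\<in>Fam. \<exists>w. H = kernel n w \<and> good n v w"
  proof
    fix H assume "H \<in> Fam"
    then have "H \<in> hyperplanes p \<or> H \<in> walls p" using Fam by auto
    then show "\<exists>w. H = kernel n w \<and> good n v w"
    proof
      assume "H \<in> hyperplanes p" then show ?thesis using hyp_good by blast
    next
      assume "H \<in> walls p" then show ?thesis using walls_good by blast
    qed
  qed
  then obtain g where g: "\<forall>H\<in>Fam. H = kernel n (g H) \<and> good n v (g H)" by metis
  define J where "J = {i. i < n \<and> (\<forall>H\<in>Fam. ev n (g H) (v i) = 0)}"
  have "F = CS J"
  proof -
    have "x \<in> \<Inter>Fam \<longleftrightarrow> (\<forall>i<n. i \<notin> J \<longrightarrow> ev n (a i) x = 0)" if x: "x \<in> W0" for x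
    proof -
      have xE: "x \<in> En n" using x by (simp add: W0_def)
      have "x \<in> \<Inter>Fam \<longleftrightarrow> (\<forall>H\<in>Fam. ev n (g H) x = 0)"
        using g xE by (auto simp: kernel_def)
      also have "\<dots> \<longleftrightarrow> (\<forall>H\<in>Fam. \<forall>i<n. ev n (g H) (v i) \<noteq> 0 \<longrightarrow> ev n (a i) x = 0)"
        using g good_zero[OF _ x] by auto
      also have "\<dots> \<longleftrightarrow> (\<forall>i<n. i \<notin> J \<longrightarrow> ev n (a i) x = 0)"
        by (auto simp: J_def)
      finally show ?thesis .
    qed
    then show ?thesis unfolding F CS_W0 by auto
  qed
  moreover have "J \<subseteq> {..<n}" by (auto simp: J_def)
  ultimately show "F \<in> {simp_cone v S | S. S \<subseteq> {..<n}}" using cone_char by auto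
next
  fix F assume "F \<in> {simp_cone v S | S. S \<subseteq> {..<n}}"
  then obtain S where S: "S \<subseteq> {..<n}" "F = simp_cone v S" by auto
  define Fam where "Fam = {kernel n (a i) | i. i < n \<and> i \<notin> S}"
  have "Fam \<subseteq> hyperplanes p \<union> walls p" using a_walls by (auto simp: Fam_def)
  moreover have "F = weyl_chamber p \<inter> \<Inter>Fam"
  proof -
    have "F = CS S" using S by (simp add: cone_char)
    also have "\<dots> = W0 \<inter> \<Inter>Fam"
      by (auto simp: CS_W0 Fam_def kernel_def W0_def)
    finally show ?thesis by (simp add: W_eq)
  qed
  ultimately show "F \<in> {F. is_flat p F}" by (auto simp: is_flat_def)
qed

theorem main:
  shows "(\<exists>v :: nat \<Rightarrow> nat \<Rightarrow> real.
            (\<forall>i<n. v i \<in> En n) \<and> inj_on v {..<n} \<and>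
            \<not> module.dependent fscale (v ` {..<n}) \<and>
            chambers p = {simp_cone v {..<n}} \<and>
            {F. is_face p F} = {simp_cone v S | S. S \<subseteq> {..<n}})
       \<and> card (chambers p) = 1
       \<and> (\<forall>k. card {F. is_face p F \<and> span_dim F = k} = n choose k)
       \<and> (\<forall>k. card {F. is_flat p F \<and> span_dim F = k} = n choose k)"
proof (intro conjI allI)
  show "\<exists>v :: nat \<Rightarrow> nat \<Rightarrow> real.
            (\<forall>i<n. v i \<in> En n) \<and> inj_on v {..<n} \<and>
            \<not> module.dependent fscale (v ` {..<n}) \<and>
            chambers p = {simp_cone v {..<n}} \<and>
            {F. is_face p F} = {simp_cone v S | S. S \<subseteq> {..<n}}"
    using vEn v_inj indep chambers_eq W0_cone faces_eq by (intro exI[of _ v]) auto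
  show "card (chambers p) = 1" by (simp add: chambers_eq)
  fix k
  have "{F. is_face p F \<and> span_dim F = k} = {F. F \<in> {simp_cone v S | S. S \<subseteq> {..<n}} \<and> span_dim F = k}"
    using faces_eq by blast
  then show "card {F. is_face p F \<and> span_dim F = k} = n choose k" using count_cones by simp
next
  fix k
  have "{F. is_flat p F \<and> span_dim F = k} = {F. F \<in> {simp_cone v S | S. S \<subseteq> {..<n}} \<and> span_dim F = k}"
    using flats_eq by blast
  then show "card {F. is_flat p F \<and> span_dim F = k} = n choose k" using count_cones by simp
qed

end



lemma ev_fneg: "ev n (- f) x = - ev n f x"
  by (simp add: ev_def sum_negf)

definition aBC :: "nat \<Rightarrow> nat \<Rightarrow> real" where "aBC i = ee i - ee (Suc i)"
definition vBC :: "nat \<Rightarrow> nat \<Rightarrow> real" where "vBC i = (\<lambda>j. if j \<le> i then 1 else 0)"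

lemma ev_vBC: "i < n \<Longrightarrow> ev n w (vBC i) = (\<Sum>j\<le>i. w j)"
proof -
  assume i: "i < n"
  have "ev n w (vBC i) = (\<Sum>j<n. if j \<le> i then w j else 0)"
    by (simp add: ev_def vBC_def if_distrib[of "\<lambda>c. _ * c"] cong: if_cong)
  also have "\<dots> = (\<Sum>j\<in>{..<n} \<inter> {j. j \<le> i}. w j)" by (simp add: sum.inter_restrict)
  also have "{..<n} \<inter> {j. j \<le> i} = {..i}" using i by auto
  finally show ?thesis .
qed

lemma ev_ee_vBC: "i < n \<Longrightarrow> ev n (ee k) (vBC i) = (if k < n \<and> k \<le> i then 1 else 0)"
  by (simp add: ev_ee vBC_def)

lemma tele: "k \<le> m \<Longrightarrow> (\<Sum>i<m. (x i - x (Suc i)) * (if k \<le> i then 1 else 0)) = x k - (x m::real)"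
proof (induction m)
  case 0 then show ?case by simp
next
  case (Suc m)
  show ?case
  proof (cases "k \<le> m")
    case True then show ?thesis using Suc by simp
  next
    case False then have "k = Suc m" using Suc by simp
    then show ?thesis by simp
  qed
qed

lemma BC_setup:
  assumes rk: "rank p = n" and n: "n \<ge> 1" and c: "c > 0"
    and sr: "simple_roots p = {ee i - ee (Suc i) | i. Suc i < n} \<union> {fscale c (ee (n - 1))}"
    and hw: "\<And>w. w \<in> weights p \<Longrightarrow> nonzero_fun n w \<Longrightarrow> good n vBC w"
  shows "cone_setup p n aBC vBC"
proof
  show "rank p = n" "n \<ge> 1" by (fact rk, fact n)
  show "\<And>i. i < n \<Longrightarrow> vBC i \<in> En n" by (auto simp: En_def vBC_def)
  show "\<And>i j. i < n \<Longrightarrow> j < n \<Longrightarrow> ev n (aBC i) (vBC j) = (if i = j then 1 else 0)"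
    by (auto simp: aBC_def ev_fdiff ev_ee_vBC)
  show "\<And>x k. x \<in> En n \<Longrightarrow> x k = (\<Sum>i<n. ev n (aBC i) x * vBC i k)"
  proof -
    fix x k assume x: "x \<in> En n"
    have e: "ev n (aBC i) x = x i - x (Suc i)" if "i < n" for i
      using that x by (auto simp: aBC_def ev_fdiff ev_ee En_def)
    have "(\<Sum>i<n. ev n (aBC i) x * vBC i k) = (\<Sum>i<n. (x i - x (Suc i)) * (if k \<le> i then 1 else 0))"
      by (intro sum.cong) (auto simp: e vBC_def)
    also have "\<dots> = x k"
    proof (cases "k < n")
      case True then show ?thesis using tele[of k n x] x by (simp add: En_def)
    next
      case False then show ?thesis using x by (simp add: En_def)
    qed
    finally show "x k = (\<Sum>i<n. ev n (aBC i) x * vBC i k)" by simp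
  qed
  show "\<And>s. s \<in> simple_roots p \<Longrightarrow> \<exists>i<n. \<exists>c>0. \<forall>k<n. s k = c * aBC i k"
  proof -
    fix s assume "s \<in> simple_roots p"
    then have "(\<exists>i. s = ee i - ee (Suc i) \<and> Suc i < n) \<or> s = fscale c (ee (n - 1))" using sr by auto
    then show "\<exists>i<n. \<exists>c>0. \<forall>k<n. s k = c * aBC i k"
    proof
      assume "\<exists>i. s = ee i - ee (Suc i) \<and> Suc i < n"
      then obtain i where "s = ee i - ee (Suc i)" "Suc i < n" by blast
      then show ?thesis by (intro exI[of _ i] conjI exI[of _ 1]) (auto simp: aBC_def)
    next
      assume "s = fscale c (ee (n - 1))"
      then show ?thesis using n c
        by (intro exI[of _ "n - 1"] conjI exI[of _ c]) (auto simp: aBC_def ee_def)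
    qed
  qed
  show "\<And>i. i < n \<Longrightarrow> \<exists>s\<in>simple_roots p. \<exists>c>0. \<forall>k<n. s k = c * aBC i k"
  proof -
    fix i assume i: "i < n"
    show "\<exists>s\<in>simple_roots p. \<exists>c>0. \<forall>k<n. s k = c * aBC i k"
    proof (cases "Suc i < n")
      case True
      then show ?thesis using sr by (intro bexI[of _ "ee i - ee (Suc i)"] exI[of _ 1]) (auto simp: aBC_def)
    next
      case False then have "i = n - 1" using i by simp
      then show ?thesis using sr c by (intro bexI[of _ "fscale c (ee (n - 1))"] exI[of _ c]) (auto simp: aBC_def ee_def)
    qed
  qed
  show "\<And>w. w \<in> weights p \<Longrightarrow> nonzero_fun n w \<Longrightarrow> good n vBC w" by (fact hw)
qed

lemma good_ee: "good n vBC (ee k)"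
  by (auto simp: good_def ev_ee_vBC)

lemma good_nee: "good n vBC (- ee k)"
  by (auto simp: good_def ev_ee_vBC ev_fneg)

lemma good_V_B: "w \<in> weights_V_B n \<Longrightarrow> nonzero_fun n w \<Longrightarrow> good n vBC w"
  by (auto simp: weights_V_B_def good_ee good_nee nonzero_fun_def)

lemma good_V_C: "w \<in> weights_V_C n \<Longrightarrow> good n vBC w"
  by (auto simp: weights_V_C_def good_ee good_nee)

lemma good_W2: "w \<in> weights_W2_0 n \<Longrightarrow> nonzero_fun n w \<Longrightarrow> good n vBC w"
proof -
  assume w: "w \<in> weights_W2_0 n" and nz: "nonzero_fun n w"
  then have "w \<noteq> 0" by (auto simp: nonzero_fun_def)
  then obtain s t i j where st: "s \<in> {1, -1}" "t \<in> {1, -1}" "i < j" "j < n"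
      and we: "w = fscale s (ee i) + fscale t (ee j)"
    using w by (auto simp: weights_W2_0_def split: if_splits)
  have e: "ev n w (vBC m) = s * (if i \<le> m then 1 else 0) + t * (if j \<le> m then 1 else 0)" if "m < n" for m
    using that st by (simp add: we ev_fadd ev_fscale_f ev_ee_vBC)
  show ?thesis unfolding good_def using st
    by (auto simp: e)
qed




definition vec4 :: "real \<Rightarrow> real \<Rightarrow> real \<Rightarrow> real \<Rightarrow> nat \<Rightarrow> real" where
  "vec4 a b c d = (\<lambda>j. if j = 0 then a else if j = 1 then b else if j = 2 then c else if j = 3 then d else 0)"

definition vF :: "nat \<Rightarrow> nat \<Rightarrow> real" where
  "vF i = (if i = 0 then vec4 1 1 0 0 else if i = 1 then vec4 2 1 1 0 else if i = 2 then vec4 3 1 1 1 else vec4 2 0 0 0)"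

definition aF :: "nat \<Rightarrow> nat \<Rightarrow> real" where
  "aF i = (if i = 0 then ee 1 - ee 2 else if i = 1 then ee 2 - ee 3 else if i = 2 then ee 3
           else fscale (1/2) (ee 0 - ee 1 - ee 2 - ee 3))"

lemma ev4: "ev 4 f x = f 0 * x 0 + f 1 * x 1 + f 2 * x 2 + f 3 * x 3"
  by (simp add: ev_def eval_nat_numeral)

lemma sum4: "(\<Sum>i<(4::nat). g i) = g 0 + g 1 + g 2 + (g 3::real)"
  by (simp add: eval_nat_numeral)

lemma less4: "i < (4::nat) \<longleftrightarrow> i = 0 \<or> i = 1 \<or> i = 2 \<or> i = 3" by auto

lemma vF_nonneg: "0 \<le> vF m k" by (auto simp: vF_def vec4_def)

lemma F4_setup: "cone_setup F4_26 4 aF vF"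
proof
  show "rank F4_26 = 4" "4 \<ge> (1::nat)" by simp_all
  show "\<And>i. i < 4 \<Longrightarrow> vF i \<in> En 4" by (auto simp: En_def vF_def vec4_def)
  show "\<And>i j. i < 4 \<Longrightarrow> j < 4 \<Longrightarrow> ev 4 (aF i) (vF j) = (if i = j then 1 else 0)"
    unfolding less4 by (auto simp: ev4 aF_def vF_def vec4_def ee_def)
  show "\<And>x k. x \<in> En 4 \<Longrightarrow> x k = (\<Sum>i<4. ev 4 (aF i) x * vF i k)"
  proof -
    fix x k assume x: "x \<in> En 4"
    show "x k = (\<Sum>i<4. ev 4 (aF i) x * vF i k)"
    proof (cases "k < 4")
      case True then show ?thesis unfolding less4 sum4
        by (auto simp: ev4 aF_def vF_def vec4_def ee_def algebra_simps)
    next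
      case False then show ?thesis using x unfolding sum4 by (simp add: En_def vF_def vec4_def)
    qed
  qed
  have sr: "simple_roots F4_26 = aF ` {..<4}"
    by (simp add: aF_def eval_nat_numeral lessThan_Suc insert_commute)
  show "\<And>s. s \<in> simple_roots F4_26 \<Longrightarrow> \<exists>i<4. \<exists>c>0. \<forall>k<4. s k = c * aF i k"
    unfolding sr by (auto intro!: exI[of _ "1::real"])
  show "\<And>i. i < 4 \<Longrightarrow> \<exists>s\<in>simple_roots F4_26. \<exists>c>0. \<forall>k<4. s k = c * aF i k"
    unfolding sr by (auto intro!: exI[of _ "1::real"])
  show "\<And>w. w \<in> weights F4_26 \<Longrightarrow> nonzero_fun 4 w \<Longrightarrow> good 4 vF w"
  proof -
    fix w assume w: "w \<in> weights F4_26" and nz: "nonzero_fun 4 w"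
    then have "w \<noteq> 0" by (auto simp: nonzero_fun_def)
    then have "(\<exists>i. w = ee i) \<or> (\<exists>i. w = - ee i) \<or>
       (\<exists>s. w = (\<lambda>j. if j < 4 then s j / 2 else 0) \<and> (\<forall>j. s j \<in> {1, -1}))"
      using w by (auto simp: weights_F4_26_def)
    then show "good 4 vF w"
    proof (elim disjE exE conjE)
      fix i assume "w = ee i" then show ?thesis by (simp add: good_def ev_ee vF_nonneg)
    next
      fix i assume "w = - ee i" then show ?thesis by (simp add: good_def ev_ee ev_fneg vF_nonneg)
    next
      fix s assume ws: "w = (\<lambda>j. if j < 4 then s j / 2 else 0)" and s: "\<forall>j. s j \<in> {1, -1}"
      have b: "s j \<le> 1" "-1 \<le> s j" for j using s[rule_format, of j] by auto
      have e: "ev 4 w (vF m) = (if m = 0 then (s 0 + s 1) / 2 else if m = 1 then (2 * s 0 + s 1 + s 2) / 2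
           else if m = 2 then (3 * s 0 + s 1 + s 2 + s 3) / 2 else s 0)" for m
        by (simp add: ws ev4 vF_def vec4_def)
      show ?thesis
      proof (cases "s 0 = 1")
        case True
        then show ?thesis unfolding good_def e using b[of 1] b[of 2] b[of 3] by auto
      next
        case False then have "s 0 = -1" using s by auto
        then show ?thesis unfolding good_def e using b[of 1] b[of 2] b[of 3] by auto
      qed
    qed
  qed
qed

lemma ee_apply: "ee i j = (if j = i then 1 else 0)" by (simp add: ee_def)

lemma G2_setup: "cone_setup G2_7 2 ee ee"
proof
  show "rank G2_7 = 2" "2 \<ge> (1::nat)" by simp_all
  show "\<And>i. i < 2 \<Longrightarrow> ee i \<in> En 2" by (simp add: ee_En)
  show "\<And>i j. i < 2 \<Longrightarrow> j < 2 \<Longrightarrow> ev 2 (ee i) (ee j) = (if i = j then 1 else 0)"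
    by (simp add: ev_ee ee_apply)
  show "\<And>x k. x \<in> En 2 \<Longrightarrow> x k = (\<Sum>i<2. ev 2 (ee i) x * ee i k)"
    by (auto simp: ev_ee ee_apply eval_nat_numeral En_def)
  have sr: "simple_roots G2_7 = ee ` {..<2}"
    by (simp add: eval_nat_numeral lessThan_Suc insert_commute)
  show "\<And>s. s \<in> simple_roots G2_7 \<Longrightarrow> \<exists>i<2. \<exists>c>0. \<forall>k<2. s k = c * ee i k"
    unfolding sr by (auto intro!: exI[of _ "1::real"])
  show "\<And>i. i < 2 \<Longrightarrow> \<exists>s\<in>simple_roots G2_7. \<exists>c>0. \<forall>k<2. s k = c * ee i k"
    unfolding sr by (auto intro!: exI[of _ "1::real"])
  show "\<And>w. w \<in> weights G2_7 \<Longrightarrow> nonzero_fun 2 w \<Longrightarrow> good 2 ee w"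
  proof -
    have less2: "i < (2::nat) \<longleftrightarrow> i = 0 \<or> i = 1" for i by auto
    have g: "good 2 ee w \<longleftrightarrow> (0 \<le> w 0 \<and> 0 \<le> w 1) \<or> (w 0 \<le> 0 \<and> w 1 \<le> 0)" for w
      unfolding good_def less2 by (auto simp: ev_ee2)
    fix w assume "w \<in> weights G2_7" "nonzero_fun 2 w"
    then show "good 2 ee w" unfolding g by (auto simp: weights_G2_7_def ee_apply)
  qed
qed

theorem theorem1p27:
  fixes p :: pair and n :: nat
  assumes "valid_pair p" and "rank p = n"
  shows "(\<exists>v :: nat \<Rightarrow> nat \<Rightarrow> real.
            (\<forall>i<n. v i \<in> En n) \<and> inj_on v {..<n} \<and>
            \<not> module.dependent fscale (v ` {..<n}) \<and>
            chambers p = {simp_cone v {..<n}} \<and>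
            {F. is_face p F} = {simp_cone v S | S. S \<subseteq> {..<n}})
       \<and> card (chambers p) = 1
       \<and> (\<forall>k. card {F. is_face p F \<and> span_dim F = k} = n choose k)
       \<and> (\<forall>k. card {F. is_flat p F \<and> span_dim F = k} = n choose k)"
proof -
  have "cone_setup p n (if n = 0 then ee else aBC) (if n = 0 then ee else vBC) \<or>
        cone_setup p n aF vF \<or> cone_setup p n ee ee"
  proof (cases p)
    case (SO_odd_V m)
    then have "cone_setup p n aBC vBC" using assms
      by (intro BC_setup[of _ _ 1]) (auto intro: good_V_B)
    then show ?thesis using assms SO_odd_V by simp
  next
    case (Sp_V m)
    then have "cone_setup p n aBC vBC" using assms
      by (intro BC_setup[of _ _ 2]) (auto intro: good_V_C)
    then show ?thesis using assms Sp_V by simp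
  next
    case (Sp_Wedge2_0 m)
    then have "cone_setup p n aBC vBC" using assms
      by (intro BC_setup[of _ _ 2]) (auto intro: good_W2)
    then show ?thesis using assms Sp_Wedge2_0 by simp
  next
    case (Sp_V_Wedge2_0 m)
    then have "cone_setup p n aBC vBC" using assms
      by (intro BC_setup[of _ _ 2]) (auto intro: good_W2 good_V_C)
    then show ?thesis using assms Sp_V_Wedge2_0 by simp
  next
    case F4_26 then show ?thesis using assms F4_setup by simp
  next
    case G2_7 then show ?thesis using assms G2_setup by simp
  qed
  then show ?thesis using cone_setup.main by blast
qed



end
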